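(* Every $\gamma_{\rm tg}$-critical graph is open twin-free.
   Context: A graph is open twin-free if it has no two distinct vertices $u,v$ with $N(u)=N(v)$. Total domination game on a graph without isolated vertices: Dominator and Staller alternately choose vertices, each chosen vertex must be adjacent to some vertex not yet totally dominated; the game ends when no legal move exists; Dominator minimizes, Staller maximizes the number of moves; $\gamma_{\rm tg}(G)$ is the number of moves in the Dominator-start game under optimal play. $G|v$ is $G$ with $v$ declared already totally dominated, with $\gamma_{\rm tg}(G|v)$ defined analogously. $G$ is $\gamma_{\rm tg}$-critical if $\gamma_{\rm tg}(G|v)<\gamma_{\rm tg}(G)$ for every vertex $v$. *)

theory Defs
  imports Main
begin

text \<open>A finite simple graph is given by a finite vertex set V and a symmetric,
irreflexive adjacency relation E; only edges between vertices of V matter.\<close>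

definition simple_graph :: "'a set \<Rightarrow> ('a \<Rightarrow> 'a \<Rightarrow> bool) \<Rightarrow> bool" where
  "simple_graph V E \<longleftrightarrow> finite V \<and> (\<forall>u v. E u v \<longrightarrow> E v u) \<and> (\<forall>v. \<not> E v v)"

definition nbhd :: "'a set \<Rightarrow> ('a \<Rightarrow> 'a \<Rightarrow> bool) \<Rightarrow> 'a \<Rightarrow> 'a set" where
  "nbhd V E v = {u \<in> V. E v u}"

definition no_isolated :: "'a set \<Rightarrow> ('a \<Rightarrow> 'a \<Rightarrow> bool) \<Rightarrow> bool" where
  "no_isolated V E \<longleftrightarrow> (\<forall>v\<in>V. nbhd V E v \<noteq> {})"

definition open_twin_free :: "'a set \<Rightarrow> ('a \<Rightarrow> 'a \<Rightarrow> bool) \<Rightarrow> bool" where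
  "open_twin_free V E \<longleftrightarrow> (\<forall>u\<in>V. \<forall>v\<in>V. u \<noteq> v \<longrightarrow> nbhd V E u \<noteq> nbhd V E v)"

text \<open>Game state: the set T of vertices already totally dominated.
A vertex v is a legal move iff it is adjacent to some vertex not yet totally dominated.\<close>
definition legal_moves :: "'a set \<Rightarrow> ('a \<Rightarrow> 'a \<Rightarrow> bool) \<Rightarrow> 'a set \<Rightarrow> 'a set" where
  "legal_moves V E T = {v \<in> V. \<exists>u \<in> nbhd V E v. u \<notin> T}"

text \<open>tg_value V E d T: number of remaining moves under optimal play from state T,
where d = True means Dominator (minimizer) is to move, d = False Staller (maximizer).\<close>
function tg_value :: "'a set \<Rightarrow> ('a \<Rightarrow> 'a \<Rightarrow> bool) \<Rightarrow> bool \<Rightarrow> 'a set \<Rightarrow> nat" where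
  "tg_value V E d T =
     (if \<not> finite V \<or> legal_moves V E T = {} then 0
      else if d then Min ((\<lambda>v. Suc (tg_value V E False (T \<union> nbhd V E v))) ` legal_moves V E T)
      else Max ((\<lambda>v. Suc (tg_value V E True (T \<union> nbhd V E v))) ` legal_moves V E T))"
  by pat_completeness auto
termination
proof (relation "measure (\<lambda>(V, E, d, T). card (V - T))")
  show "wf (measure (\<lambda>(V, E, d, T). card (V - T)))" by simp
next
  fix V :: "'a set" and E d T v
  assume "\<not> (\<not> finite V \<or> legal_moves V E T = {})" "v \<in> legal_moves V E T"
  then obtain u where "finite V" "u \<in> nbhd V E v" "u \<notin> T"
    by (auto simp: legal_moves_def)
  then have "V - (T \<union> nbhd V E v) \<subset> V - T" by (auto simp: nbhd_def)
  then have "card (V - (T \<union> nbhd V E v)) < card (V - T)"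
    using \<open>finite V\<close> by (meson finite_Diff psubset_card_mono)
  then show "((V, E, False, T \<union> nbhd V E v), V, E, d, T) \<in> measure (\<lambda>(V, E, d, T). card (V - T))"
    and "((V, E, True, T \<union> nbhd V E v), V, E, d, T) \<in> measure (\<lambda>(V, E, d, T). card (V - T))"
    by simp_all
qed

text \<open>Game total domination number (Dominator starts) of G and of G|v.\<close>
definition gamma_tg :: "'a set \<Rightarrow> ('a \<Rightarrow> 'a \<Rightarrow> bool) \<Rightarrow> nat" where
  "gamma_tg V E = tg_value V E True {}"

definition gamma_tg_pre :: "'a set \<Rightarrow> ('a \<Rightarrow> 'a \<Rightarrow> bool) \<Rightarrow> 'a \<Rightarrow> nat" where
  "gamma_tg_pre V E v = tg_value V E True {v}"

definition gamma_tg_critical :: "'a set \<Rightarrow> ('a \<Rightarrow> 'a \<Rightarrow> bool) \<Rightarrow> bool" where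
  "gamma_tg_critical V E \<longleftrightarrow> (\<forall>v\<in>V. gamma_tg_pre V E v < gamma_tg V E)"

end

theory Submission
  imports Defs
begin

declare tg_value.simps[simp del]

lemma legal_eq:
  assumes sym: "\<forall>a b. E a b \<longrightarrow> E b a" and vV: "v \<in> V" and uv0: "u \<noteq> v"
    and N: "nbhd V E u = nbhd V E v" and uv: "u \<in> T \<longleftrightarrow> v \<in> T"
  shows "legal_moves V E (insert u T) = legal_moves V E T"
proof
  show "legal_moves V E (insert u T) \<subseteq> legal_moves V E T"
    unfolding legal_moves_def by blast
next
  show "legal_moves V E T \<subseteq> legal_moves V E (insert u T)"
  proof
    fix w assume "w \<in> legal_moves V E T"
    then obtain x where wV: "w \<in> V" and x: "x \<in> nbhd V E w" "x \<notin> T"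
      unfolding legal_moves_def by blast
    show "w \<in> legal_moves V E (insert u T)"
    proof (cases "x = u")
      case True
      have "E w u" "u \<in> V" using x True unfolding nbhd_def by auto
      then have "E u w" using sym by blast
      then have "w \<in> nbhd V E u" using wV unfolding nbhd_def by blast
      then have "w \<in> nbhd V E v" using N by simp
      then have "E v w" unfolding nbhd_def by blast
      then have "E w v" using sym by blast
      then have "v \<in> nbhd V E w" using vV unfolding nbhd_def by blast
      moreover have "v \<notin> insert u T" using uv True x uv0 by blast
      ultimately show ?thesis using wV unfolding legal_moves_def by blast
    next
      case False
      then have "x \<notin> insert u T" using x by blast
      then show ?thesis using wV x unfolding legal_moves_def by blast
    qed
  qed
qed

lemma key:
  "(\<forall>a b. E a b \<longrightarrow> E b a) \<Longrightarrow> u \<in> V \<Longrightarrow> v \<in> V \<Longrightarrow> u \<noteq> v \<Longrightarrow>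
   nbhd V E u = nbhd V E v \<Longrightarrow> (u \<in> T \<longleftrightarrow> v \<in> T) \<Longrightarrow>
   tg_value V E d (insert u T) = tg_value V E d T"
proof (induction V E d T rule: tg_value.induct)
  case (1 V E d T)
  note P = "1.prems"
  have L: "legal_moves V E (insert u T) = legal_moves V E T"
    by (rule legal_eq[OF P(1) P(3) P(4) P(5) P(6)])
  have inv: "u \<in> T \<union> nbhd V E w \<longleftrightarrow> v \<in> T \<union> nbhd V E w" if wV: "w \<in> V" for w
  proof -
    have a: "u \<in> nbhd V E w \<longleftrightarrow> E w u" using P(2) by (simp add: nbhd_def)
    have b: "v \<in> nbhd V E w \<longleftrightarrow> E w v" using P(3) by (simp add: nbhd_def)
    have c: "w \<in> nbhd V E u \<longleftrightarrow> E u w" using wV by (simp add: nbhd_def)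
    have d: "w \<in> nbhd V E v \<longleftrightarrow> E v w" using wV by (simp add: nbhd_def)
    have e: "E w u \<longleftrightarrow> E u w" "E w v \<longleftrightarrow> E v w" using P(1) by blast+
    have "u \<in> nbhd V E w \<longleftrightarrow> v \<in> nbhd V E w" using a b c d e P(5) by metis
    then show ?thesis using P(6) by blast
  qed
  show ?case
  proof (cases "\<not> finite V \<or> legal_moves V E T = {}")
    case True
    then show ?thesis using L by (subst (1 2) tg_value.simps) simp
  next
    case False
    have eqs: "(\<lambda>w. Suc (tg_value V E b (insert u T \<union> nbhd V E w))) ` legal_moves V E T
      = (\<lambda>w. Suc (tg_value V E b (T \<union> nbhd V E w))) ` legal_moves V E T"
      if "b = (\<not> d)" for b
    proof (rule image_cong[OF refl])
      fix w assume w: "w \<in> legal_moves V E T"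
      have wV: "w \<in> V" using w by (simp add: legal_moves_def)
      have "insert u T \<union> nbhd V E w = insert u (T \<union> nbhd V E w)" by blast
      moreover have "tg_value V E b (insert u (T \<union> nbhd V E w)) = tg_value V E b (T \<union> nbhd V E w)"
      proof (cases d)
        case True
        then show ?thesis using "1.IH"(1)[OF False True w P(1-5) inv[OF wV]] that True by simp
      next
        case f: False
        then show ?thesis using "1.IH"(2)[OF False f w P(1-5) inv[OF wV]] that f by simp
      qed
      ultimately show "Suc (tg_value V E b (insert u T \<union> nbhd V E w)) = Suc (tg_value V E b (T \<union> nbhd V E w))"
        by simp
    qed
    show ?thesis
    proof (cases d)
      case True
      then show ?thesis
        apply (subst (1 2) tg_value.simps)
        using False L eqs[of False] by simp
    next
      case f: False
      then show ?thesis
        apply (subst (1 2) tg_value.simps)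
        using False L eqs[of True] by simp
    qed
  qed
qed

theorem corollary4p3:
  fixes V :: "'a set" and E :: "'a \<Rightarrow> 'a \<Rightarrow> bool"
  assumes "simple_graph V E" and "no_isolated V E" and "gamma_tg_critical V E"
  shows "open_twin_free V E"
  unfolding open_twin_free_def
proof (intro ballI impI notI)
  fix u v assume uv: "u \<in> V" "v \<in> V" "u \<noteq> v" "nbhd V E u = nbhd V E v"
  have sym: "\<forall>a b. E a b \<longrightarrow> E b a" using assms(1) by (simp add: simple_graph_def)
  have "tg_value V E True (insert u {}) = tg_value V E True {}"
    by (rule key) (use sym uv in auto)
  then have "gamma_tg_pre V E u = gamma_tg V E" by (simp add: gamma_tg_pre_def gamma_tg_def)
  then show False using assms(3) uv by (auto simp: gamma_tg_critical_def)
qed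

end
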